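(* Let $0<q<1$, $p,l\in\mathbb{Z}_+$ and $x\in\mathbb{C}$. Then $$p_l(x;1,1;q)\,(q^{1-p}x;q)_p=\sum_{m=0}^l\frac{q^{m(m-l+p)}(q;q)_{l+m}}{(q;q)_{l-m}(q;q)_m^2}\,p_{l-m}(q^p;q^m,q^m;q)\,(q^{1-p-m}x;q)_{p+m}.$$
   Context: $(a;q)_n=\prod_{j=0}^{n-1}(1-aq^j)$. Little $q$-Jacobi polynomial: $p_n(x;a,b;q)=\sum_{k=0}^n\frac{(q^{-n};q)_k(q^{n+1}ab;q)_k}{(qa;q)_k(q;q)_k}(qx)^k$. *)

theory Defs
  imports Complex_Main
begin

definition qpoch :: "'a::field \<Rightarrow> 'a \<Rightarrow> nat \<Rightarrow> 'a" where
  "qpoch a q n = (\<Prod>j<n. (1 - a * q ^ j))"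

definition little_qjacobi :: "nat \<Rightarrow> 'a::field \<Rightarrow> 'a \<Rightarrow> 'a \<Rightarrow> 'a \<Rightarrow> 'a" where
  "little_qjacobi n x a b q =
     (\<Sum>k=0..n. qpoch (inverse (q ^ n)) q k * qpoch (q ^ (n+1) * a * b) q k
                / (qpoch (q * a) q k * qpoch q q k) * (q * x) ^ k)"

end

theory Submission imports Defs begin

lemma qpoch_Suc: "qpoch a q (Suc n) = qpoch a q n * (1 - a * q ^ n)"
  by (simp add: qpoch_def)

lemma qpoch_0[simp]: "qpoch a q 0 = 1"
  by (simp add: qpoch_def)

lemma qpoch_add: "qpoch a q (m + n) = qpoch a q m * qpoch (a * q ^ m) q n"
  by (induction n) (simp_all add: qpoch_Suc power_add mult_ac)

lemma pow_ne_1: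
  fixes Q :: complex
  assumes "norm Q < 1" "0 < k"
  shows "Q ^ k \<noteq> 1"
proof
  assume "Q ^ k = 1"
  then have "norm Q ^ k = 1" by (metis norm_one norm_power)
  moreover have "norm Q ^ k < 1" using assms
    by (simp add: power_less_one_iff)
  ultimately show False by simp
qed

lemma qpoch_pow_ne0:
  fixes Q :: complex
  assumes "norm Q < 1" "0 < k"
  shows "qpoch (Q ^ k) Q n \<noteq> 0"
proof -
  have "1 - Q ^ k * Q ^ j \<noteq> 0" for j
  proof -
    have "Q ^ (k + j) \<noteq> 1" using assms pow_ne_1 by simp
    then show ?thesis by (simp add: power_add)
  qed
  then show ?thesis unfolding qpoch_def by (simp add: prod_zero_iff)
qed

lemma qpoch_QQ_ne0:
  fixes Q :: complex
  assumes "norm Q < 1"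
  shows "qpoch Q Q n \<noteq> 0"
  using qpoch_pow_ne0[OF assms, of 1] by simp

fun qb :: "complex \<Rightarrow> nat \<Rightarrow> nat \<Rightarrow> complex" where
  "qb Q n 0 = 1"
| "qb Q 0 (Suc m) = 0"
| "qb Q (Suc n) (Suc m) = qb Q n m + Q ^ Suc m * qb Q n (Suc m)"

lemma qb_zero: "n < m \<Longrightarrow> qb Q n m = 0"
proof (induction n arbitrary: m)
  case 0 then show ?case by (cases m) auto
next
  case (Suc n) then show ?case by (cases m) auto
qed

lemma qb_closed:
  assumes "norm Q < 1"
  shows "m \<le> n \<Longrightarrow> qb Q n m * qpoch Q Q m * qpoch Q Q (n - m) = qpoch Q Q n"
proof (induction n arbitrary: m)
  case 0 then show ?case by simp
next
  case (Suc n)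
  show ?case
  proof (cases m)
    case 0 then show ?thesis by simp
  next
    case (Suc m')
    show ?thesis
    proof (cases "m' = n")
      case True
      have "qb Q n n = 1"
        using Suc.IH[of n] qpoch_QQ_ne0[OF assms, of n] by simp
      then show ?thesis using True Suc by (simp add: qb_zero)
    next
      case False
      with Suc Suc.prems have lt: "m' < n" by simp
      have i1: "qb Q n m' * qpoch Q Q m' * qpoch Q Q (n - m') = qpoch Q Q n"
        using Suc.IH lt by simp
      have i2: "qb Q n (Suc m') * qpoch Q Q (Suc m') * qpoch Q Q (n - Suc m') = qpoch Q Q n"
        using Suc.IH lt by simp
      have e1: "n - m' = Suc (n - Suc m')" using lt by simp
      have e2: "Suc n - Suc m' = Suc (n - Suc m')" using lt by simp
      define A where "A = qpoch Q Q m'"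
      define B where "B = qpoch Q Q (n - Suc m')"
      have i1': "qb Q n m' * A * (B * (1 - Q * Q ^ (n - Suc m'))) = qpoch Q Q n"
        using i1 unfolding A_def B_def e1 qpoch_Suc .
      have i2': "qb Q n (Suc m') * (A * (1 - Q * Q ^ m')) * B = qpoch Q Q n"
        using i2 unfolding A_def B_def qpoch_Suc .
      have pw: "Q ^ Suc m' * Q ^ (n - Suc m') = Q ^ n"
      proof -
        have "Suc m' + (n - Suc m') = n" using lt by simp
        then show ?thesis by (metis power_add)
      qed
      have "qb Q (Suc n) m * qpoch Q Q m * qpoch Q Q (Suc n - m)
          = (qb Q n m' + Q ^ Suc m' * qb Q n (Suc m')) * (A * (1 - Q * Q ^ m')) * (B * (1 - Q * Q ^ (n - Suc m')))"
        unfolding Suc e2 qpoch_Suc A_def B_def by simp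
      also have "\<dots> = qpoch Q Q n * (1 - Q * Q ^ n)"
      proof -
        have "(qb Q n m' + Q ^ Suc m' * qb Q n (Suc m')) * (A * (1 - Q * Q ^ m')) * (B * (1 - Q * Q ^ (n - Suc m')))
          = (qb Q n m' * A * (B * (1 - Q * Q ^ (n - Suc m')))) * (1 - Q * Q ^ m')
            + Q ^ Suc m' * (1 - Q * Q ^ (n - Suc m')) * (qb Q n (Suc m') * (A * (1 - Q * Q ^ m')) * B)"
          by (simp add: algebra_simps)
        also have "\<dots> = qpoch Q Q n * ((1 - Q * Q ^ m') + Q ^ Suc m' * (1 - Q * Q ^ (n - Suc m')))"
          unfolding i1' i2' by (simp add: algebra_simps)
        also have "(1 - Q * Q ^ m') + Q ^ Suc m' * (1 - Q * Q ^ (n - Suc m')) = 1 - Q * (Q ^ Suc m' * Q ^ (n - Suc m'))"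
          by (simp add: algebra_simps)
        finally show ?thesis unfolding pw .
      qed
      also have "\<dots> = qpoch Q Q (Suc n)" by (simp add: qpoch_Suc)
      finally show ?thesis .
    qed
  qed
qed

lemma gauss:
  fixes x a Q :: complex
  shows "x ^ k = (\<Sum>m\<le>k. qb Q k m * a ^ (k - m) * (\<Prod>i<m. (x - a * Q ^ i)))"
proof (induction k)
  case 0 then show ?case by simp
next
  case (Suc k)
  define P where "P m = (\<Prod>i<m. (x - a * Q ^ i))" for m
  have PS: "x * P m = P (Suc m) + a * Q ^ m * P m" for m
    by (simp add: P_def algebra_simps)
  have "x ^ Suc k = (\<Sum>m\<le>k. qb Q k m * a ^ (k - m) * (x * P m))"
    using Suc by (simp add: P_def sum_distrib_left mult_ac)
  also have "\<dots> = (\<Sum>m\<le>k. qb Q k m * a ^ (k - m) * P (Suc m))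
       + (\<Sum>m\<le>k. Q ^ m * qb Q k m * a ^ (Suc k - m) * P m)"
    by (simp add: PS algebra_simps sum.distrib Suc_diff_le)
  also have "(\<Sum>m\<le>k. Q ^ m * qb Q k m * a ^ (Suc k - m) * P m)
      = (\<Sum>m\<le>Suc k. Q ^ m * qb Q k m * a ^ (Suc k - m) * P m)"
    by (simp add: qb_zero)
  also have "\<dots> = a ^ Suc k + (\<Sum>m\<le>k. Q ^ Suc m * qb Q k (Suc m) * a ^ (k - m) * P (Suc m))"
    by (subst sum.atMost_Suc_shift) (simp add: P_def)
  finally have "x ^ Suc k = a ^ Suc k + (\<Sum>m\<le>k. (qb Q k m + Q ^ Suc m * qb Q k (Suc m)) * a ^ (k - m) * P (Suc m))"
    by (simp add: algebra_simps sum.distrib)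
  also have "\<dots> = (\<Sum>m\<le>Suc k. qb Q (Suc k) m * a ^ (Suc k - m) * P m)"
    by (subst sum.atMost_Suc_shift) (simp add: P_def)
  finally show ?case by (simp add: P_def)
qed

lemma swap_tri:
  fixes h :: "nat \<Rightarrow> nat \<Rightarrow> complex"
  shows "(\<Sum>k\<le>l. \<Sum>m\<le>k. h k m) = (\<Sum>m\<le>l. \<Sum>j\<le>l - m. h (m + j) m)"
proof -
  have "(\<Sum>(i,j)\<in>{(i,j). i+j \<le> l}. h (i + j) i) = (\<Sum>k\<le>l. \<Sum>i\<le>k. h (i + (k - i)) i)"
    by (rule sum.triangle_reindex_eq)
  also have "\<dots> = (\<Sum>k\<le>l. \<Sum>m\<le>k. h k m)"
    by (intro sum.cong refl) auto
  finally have 1: "(\<Sum>(i,j)\<in>{(i,j). i+j \<le> l}. h (i + j) i) = (\<Sum>k\<le>l. \<Sum>m\<le>k. h k m)" .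
  have "(\<Sum>(i,j)\<in>{(i,j). i+j \<le> l}. h (i + j) i) = (\<Sum>m\<le>l. \<Sum>j\<le>l - m. h (m + j) m)"
    by (auto simp: pairs_le_eq_Sigma sum.Sigma)
  with 1 show ?thesis by simp
qed

lemma expand:
  fixes c :: "nat \<Rightarrow> complex" and x a Q :: complex
  shows "(\<Sum>k=0..l. c k * x ^ k) = (\<Sum>m\<le>l. (\<Sum>j\<le>l - m. c (m + j) * qb Q (m + j) m * a ^ j) * (\<Prod>i<m. (x - a * Q ^ i)))"
proof -
  have "(\<Sum>k=0..l. c k * x ^ k) = (\<Sum>k\<le>l. \<Sum>m\<le>k. c k * (qb Q k m * a ^ (k - m) * (\<Prod>i<m. (x - a * Q ^ i))))"
    by (simp add: atLeast0AtMost gauss[of x k Q a for k] sum_distrib_left)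
  also have "\<dots> = (\<Sum>m\<le>l. \<Sum>j\<le>l - m. c (m + j) * (qb Q (m + j) m * a ^ (m + j - m) * (\<Prod>i<m. (x - a * Q ^ i))))"
    by (rule swap_tri)
  also have "\<dots> = (\<Sum>m\<le>l. (\<Sum>j\<le>l - m. c (m + j) * qb Q (m + j) m * a ^ j) * (\<Prod>i<m. (x - a * Q ^ i)))"
    by (simp add: sum_distrib_left sum_distrib_right mult_ac)
  finally show ?thesis .
qed

lemma term_id:
  fixes Q a :: complex
  assumes Q: "norm Q < 1" "Q \<noteq> 0" and ml: "m \<le> l"
  shows "qpoch (inverse (Q ^ l)) Q (m + j) * qpoch (Q ^ (l + 1) * 1 * 1) Q (m + j)
            / (qpoch (Q * 1) Q (m + j) * qpoch Q Q (m + j)) * Q ^ (m + j) * qb Q (m + j) m * a ^ j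
       = (Q ^ m * qpoch (inverse (Q ^ l)) Q m * qpoch (Q ^ (l + 1)) Q m / (qpoch Q Q m) ^ 2)
         * (qpoch (inverse (Q ^ (l - m))) Q j * qpoch (Q ^ (l - m + 1) * Q ^ m * Q ^ m) Q j
            / (qpoch (Q * Q ^ m) Q j * qpoch Q Q j) * (Q * a) ^ j)"
proof -
  have qb: "qb Q (m + j) m = qpoch Q Q (m + j) / (qpoch Q Q m * qpoch Q Q j)"
    using qb_closed[OF Q(1), of m "m + j"] qpoch_QQ_ne0[OF Q(1)] by (simp add: field_simps)
  have e1: "inverse (Q ^ l) * Q ^ m = inverse (Q ^ (l - m))"
  proof -
    have "Q ^ l = Q ^ (l - m) * Q ^ m" using ml by (simp flip: power_add)
    then show ?thesis using Q(2) by (simp add: field_simps)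
  qed
  have e2: "Q ^ (l + 1) * Q ^ m = Q ^ (l - m + 1) * Q ^ m * Q ^ m"
    using ml by (simp flip: power_add)
  have s1: "qpoch (inverse (Q ^ l)) Q (m + j) = qpoch (inverse (Q ^ l)) Q m * qpoch (inverse (Q ^ (l - m))) Q j"
    by (simp add: qpoch_add e1)
  have s2: "qpoch (Q ^ (l + 1)) Q (m + j) = qpoch (Q ^ (l + 1)) Q m * qpoch (Q ^ (l - m + 1) * Q ^ m * Q ^ m) Q j"
    by (simp only: qpoch_add e2)
  have s3: "qpoch Q Q (m + j) = qpoch Q Q m * qpoch (Q * Q ^ m) Q j"
    by (simp add: qpoch_add)
  have n1: "qpoch Q Q m \<noteq> 0" "qpoch Q Q j \<noteq> 0" using qpoch_QQ_ne0[OF Q(1)] by auto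
  have n2: "qpoch (Q * Q ^ m) Q j \<noteq> 0" using qpoch_pow_ne0[OF Q(1), of "Suc m" j] by simp
  show ?thesis
    unfolding qb s1 mult_1_right s2 s3 using n1 n2 Q(2)
    by (simp add: field_simps power_mult_distrib power2_eq_square power_add)
qed

lemma qpoch_Suc_shift: "qpoch b Q (Suc m) = (1 - b) * qpoch (b * Q) Q m"
  unfolding qpoch_def by (subst prod.lessThan_Suc_shift) (simp add: mult_ac)

lemma coef:
  fixes Q x :: complex
  assumes Q: "norm Q < 1" "Q \<noteq> 0"
  shows "m \<le> l \<Longrightarrow> Q ^ m * qpoch (inverse (Q ^ l)) Q m * qpoch (Q ^ (l + 1)) Q m * (\<Prod>i<m. (x - Q ^ p * Q ^ i))
     = Q powi (int m * (int m - int l + int p)) * qpoch Q Q (l + m) / qpoch Q Q (l - m)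
       * qpoch (Q powi (1 - int p - int m) * x) Q m"
proof (induction m)
  case 0
  then show ?case using qpoch_QQ_ne0[OF Q(1), of l] by simp
next
  case (Suc m)
  then have ml: "m < l" by simp
  define R where "R = Q ^ (l - Suc m)"
  define M where "M = Q ^ m"
  define P where "P = Q ^ p"
  define W where "W = Q powi (int m * (int m - int l + int p))"
  define \<Phi> where "\<Phi> = qpoch (Q powi (1 - int p - int m) * x) Q m"
  have ql: "Q ^ l = Q * R * M"
  proof -
    have "l = Suc (l - Suc m) + m" using ml by simp
    then have "Q ^ l = Q ^ (Suc (l - Suc m) + m)" by simp
    then show ?thesis unfolding R_def M_def by (simp add: power_add)
  qed
  have qlm: "Q ^ (l - m) = Q * R"
  proof -
    have "l - m = Suc (l - Suc m)" using ml by simp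
    then show ?thesis unfolding R_def by simp
  qed
  have nR: "R \<noteq> 0" "M \<noteq> 0" "P \<noteq> 0" using Q(2) by (auto simp: R_def M_def P_def)
  have f2: "Q powi (1 - int p - int (Suc m)) = inverse (P * M)"
  proof -
    have "Q powi (1 - int p - int (Suc m)) = Q powi (- int (p + m))"
      by (rule arg_cong[where f="\<lambda>e. Q powi e"]) simp
    also have "\<dots> = inverse (Q ^ (p + m))" by (simp only: power_int_minus power_int_of_nat)
    finally show ?thesis by (simp add: P_def M_def power_add)
  qed
  have f2': "inverse (P * M) * x * Q = Q powi (1 - int p - int m) * x"
  proof -
    have "1 - int p - int m = 1 - int (p + m)" by simp
    then have "Q powi (1 - int p - int m) = Q / (P * M)"
      using Q(2) by (simp add: power_int_diff P_def M_def power_add)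
    then show ?thesis by (simp add: field_simps)
  qed
  have f3: "Q powi (int (Suc m) * (int (Suc m) - int l + int p)) = W * (Q * P * M / (Q * R))"
  proof -
    have "int (Suc m) * (int (Suc m) - int l + int p) = int m * (int m - int l + int p) + (int (Suc (p + m)) - int (l - m))"
      using ml by (simp add: algebra_simps of_nat_diff)
    then have "Q powi (int (Suc m) * (int (Suc m) - int l + int p)) = W * (Q ^ Suc (p + m) / Q ^ (l - m))"
      using Q(2) by (simp add: W_def power_int_add power_int_diff power_add)
    then show ?thesis unfolding qlm by (simp add: P_def M_def power_add)
  qed
  have f4: "qpoch Q Q (l + Suc m) = qpoch Q Q (l + m) * (1 - Q * (Q * R * M * M))"
    by (simp add: qpoch_Suc power_add ql M_def mult.assoc)
  have f5: "qpoch Q Q (l - m) = qpoch Q Q (l - Suc m) * (1 - Q * R)"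
  proof -
    have "l - m = Suc (l - Suc m)" using ml by simp
    then show ?thesis by (simp add: qpoch_Suc R_def)
  qed
  have n1: "qpoch Q Q (l - Suc m) \<noteq> 0" "qpoch Q Q (l - m) \<noteq> 0" using qpoch_QQ_ne0[OF Q(1)] by auto
  have n2: "1 - Q * R \<noteq> 0" using n1 f5 by auto
  have IH: "M * qpoch (inverse (Q ^ l)) Q m * qpoch (Q ^ (l + 1)) Q m * (\<Prod>i<m. (x - P * Q ^ i))
     = W * qpoch Q Q (l + m) / qpoch Q Q (l - m) * \<Phi>"
    using Suc.IH ml unfolding M_def P_def W_def \<Phi>_def by simp
  have "Q ^ Suc m * qpoch (inverse (Q ^ l)) Q (Suc m) * qpoch (Q ^ (l + 1)) Q (Suc m) * (\<Prod>i<Suc m. (x - Q ^ p * Q ^ i))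
     = (M * qpoch (inverse (Q ^ l)) Q m * qpoch (Q ^ (l + 1)) Q m * (\<Prod>i<m. (x - P * Q ^ i)))
       * (Q * (1 - inverse (Q * R * M) * M) * (1 - Q * (Q * R * M) * M) * (x - P * M))"
    unfolding qpoch_Suc by (simp add: ql M_def P_def mult_ac)
  also have "\<dots> = W * qpoch Q Q (l + m) / qpoch Q Q (l - m) * \<Phi>
       * (Q * (1 - inverse (Q * R * M) * M) * (1 - Q * (Q * R * M) * M) * (x - P * M))"
    unfolding IH ..
  also have "\<dots> = W * (Q * P * M / (Q * R)) * (qpoch Q Q (l + m) * (1 - Q * (Q * R * M * M)))
        / qpoch Q Q (l - Suc m) * ((1 - inverse (P * M) * x) * \<Phi>)"
    unfolding f5 using nR n1 n2 Q(2) by (simp add: field_simps)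
  also have "\<dots> = Q powi (int (Suc m) * (int (Suc m) - int l + int p)) * qpoch Q Q (l + Suc m) / qpoch Q Q (l - Suc m)
       * qpoch (Q powi (1 - int p - int (Suc m)) * x) Q (Suc m)"
    unfolding f3 f4 f2 qpoch_Suc_shift f2' \<Phi>_def by simp
  finally show ?case .
qed

theorem mainTheorem5:
  fixes q :: real and p l :: nat and x :: complex
  assumes "0 < q" and "q < 1"
  shows "little_qjacobi l x 1 1 (complex_of_real q)
           * qpoch (complex_of_real q powi (1 - int p) * x) (complex_of_real q) p
       = (\<Sum>m=0..l.
            complex_of_real q powi (int m * (int m - int l + int p))
            * qpoch (complex_of_real q) (complex_of_real q) (l + m)
            / (qpoch (complex_of_real q) (complex_of_real q) (l - m)
               * (qpoch (complex_of_real q) (complex_of_real q) m) ^ 2)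
            * little_qjacobi (l - m) (complex_of_real q ^ p) (complex_of_real q ^ m)
                (complex_of_real q ^ m) (complex_of_real q)
            * qpoch (complex_of_real q powi (1 - int p - int m) * x) (complex_of_real q) (p + m))"
proof -
  define Q where "Q = complex_of_real q"
  have Q: "norm Q < 1" "Q \<noteq> 0" using assms by (auto simp: Q_def)
  define F where "F = qpoch (Q powi (1 - int p) * x) Q p"
  define \<Phi> where "\<Phi> m = qpoch (Q powi (1 - int p - int m) * x) Q m" for m
  define LJ where "LJ m = little_qjacobi (l - m) (Q ^ p) (Q ^ m) (Q ^ m) Q" for m
  define C where "C m = Q powi (int m * (int m - int l + int p)) * qpoch Q Q (l + m)
            / (qpoch Q Q (l - m) * (qpoch Q Q m) ^ 2)" for m
  define K where "K m = Q ^ m * qpoch (inverse (Q ^ l)) Q m * qpoch (Q ^ (l + 1)) Q m / (qpoch Q Q m) ^ 2" for m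
  define c where "c k = qpoch (inverse (Q ^ l)) Q k * qpoch (Q ^ (l + 1) * 1 * 1) Q k
            / (qpoch (Q * 1) Q k * qpoch Q Q k) * Q ^ k" for k
  have split: "qpoch (Q powi (1 - int p - int m) * x) Q (p + m) = \<Phi> m * F" for m
  proof -
    have e: "Q powi (1 - int p - int m) * x * Q ^ m = Q powi (1 - int p) * x"
    proof -
      have "Q powi (1 - int p - int m + int m) = Q powi (1 - int p - int m) * Q powi (int m)"
        using Q(2) by (rule power_int_add[OF disjI1])
      then have "Q powi (1 - int p - int m) * Q ^ m = Q powi (1 - int p)"
        by simp
      then show ?thesis by (simp add: mult_ac)
    qed
    have "qpoch (Q powi (1 - int p - int m) * x) Q (m + p) = \<Phi> m * F"
      unfolding qpoch_add e \<Phi>_def F_def ..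
    then show ?thesis by (simp add: add.commute)
  qed
  have "little_qjacobi l x 1 1 Q = (\<Sum>k=0..l. c k * x ^ k)"
    unfolding little_qjacobi_def c_def by (simp add: power_mult_distrib mult_ac)
  also have "\<dots> = (\<Sum>m\<le>l. (\<Sum>j\<le>l - m. c (m + j) * qb Q (m + j) m * (Q ^ p) ^ j) * (\<Prod>i<m. (x - Q ^ p * Q ^ i)))"
    by (rule expand)
  also have "\<dots> = (\<Sum>m\<le>l. K m * LJ m * (\<Prod>i<m. (x - Q ^ p * Q ^ i)))"
  proof (intro sum.cong refl)
    fix m assume "m \<in> {..l}"
    then have ml: "m \<le> l" by simp
    have "(\<Sum>j\<le>l - m. c (m + j) * qb Q (m + j) m * (Q ^ p) ^ j) = K m * LJ m"
    proof -
      have t: "c (m + j) * qb Q (m + j) m * (Q ^ p) ^ j = K m * (qpoch (inverse (Q ^ (l - m))) Q j * qpoch (Q ^ (l - m + 1) * Q ^ m * Q ^ m) Q j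
            / (qpoch (Q * Q ^ m) Q j * qpoch Q Q j) * (Q * Q ^ p) ^ j)" for j
        unfolding c_def K_def by (rule term_id[OF Q ml])
      show ?thesis unfolding t LJ_def little_qjacobi_def atLeast0AtMost sum_distrib_left ..
    qed
    then show "(\<Sum>j\<le>l - m. c (m + j) * qb Q (m + j) m * (Q ^ p) ^ j) * (\<Prod>i<m. (x - Q ^ p * Q ^ i))
        = K m * LJ m * (\<Prod>i<m. (x - Q ^ p * Q ^ i))" by simp
  qed
  also have "\<dots> = (\<Sum>m\<le>l. C m * LJ m * \<Phi> m)"
  proof (intro sum.cong refl)
    fix m assume "m \<in> {..l}"
    then have ml: "m \<le> l" by simp
    have "qpoch Q Q m \<noteq> 0" using qpoch_QQ_ne0[OF Q(1)] by auto
    then show "K m * LJ m * (\<Prod>i<m. (x - Q ^ p * Q ^ i)) = C m * LJ m * \<Phi> m"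
      using coef[OF Q ml, of x p] unfolding K_def C_def \<Phi>_def
      by (simp add: field_simps)
  qed
  finally have main: "little_qjacobi l x 1 1 Q = (\<Sum>m\<le>l. C m * LJ m * \<Phi> m)" .
  have "little_qjacobi l x 1 1 Q * F = (\<Sum>m=0..l. C m * LJ m * (\<Phi> m * F))"
    unfolding main atLeast0AtMost sum_distrib_right by (simp add: mult_ac)
  then show ?thesis
    unfolding Q_def[symmetric] F_def[symmetric] split[symmetric] C_def LJ_def by simp
qed

end
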